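(* The set $\mathcal V=\{\mathbf u(\mathbf B):\mathbf B\in S\}$ is a set of pairwise $M$-distinct vertices of $\mathcal H$, and every vertex of $\mathcal H$ is $M$-equivalent to some member of $\mathcal V$.
   Context: Let $n\ge 1$, $[n]=\{0,\dots,n-1\}$, and real numbers $\gamma_0<\gamma_1<\dots<\gamma_{n-1}$. Consider vectors $\mathbf v=(v_{ydz})_{y\in[n],d,z\in\{0,1\}}\in\mathbb R^{4n}$. Define the linear map $M$ by $(M\mathbf v)_{(i,j,d_0,d_1)}=\sum_{z\in\{0,1\}:d_z=0}v_{i0z}+\sum_{z\in\{0,1\}:d_z=1}v_{j1z}$ for $i,j\in[n]$, $(d_0,d_1)\in\{0,1\}^2$, and $c_{(i,j,d_0,d_1)}=\gamma_j-\gamma_i$. Let $\mathcal H=\{\mathbf v: M\mathbf v\le \mathbf c\}$. Two vectors $\mathbf v_1,\mathbf v_2$ are $M$-equivalent if $M\mathbf v_1=M\mathbf v_2$, and $M$-distinct otherwise. A point $\mathbf v\in\mathcal H$ is a vertex of $\mathcal H$ if whenever $\mathbf v=\lambda\mathbf v_1+(1-\lambda)\mathbf v_2$ with $\lambda\in(0,1)$, $\mathbf v_1,\mathbf v_2\in\mathcal H$, we have $M\mathbf v_1=M\mathbf v_2=M\mathbf v$. Admissible signatures: $S=S_1\cup S_2\cup S_3$, sets of binary arrays $\mathbf B=(B_{ydz})\in\{0,1\}^{n\times2\times2}$: (1) $\mathbf B\in S_1$ iff there is $t\in\{0,\dots,n-2\}$ with $B_{i00}=B_{i01}=1$ for all $i\ge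 t$ and $B_{i00}\ne B_{i01}$ for all $i<t$; $B_{i10}\ne B_{i11}$ for all $i\in[n]$; and there exist $i,j$ with $B_{i10}=B_{j11}=1$. (2) $\mathbf B\in S_2$ iff $B_{(n-1)00}=B_{(n-1)01}=B_{010}=B_{011}=1$; $B_{i00}\ne B_{i01}$ for all $0\le i<n-1$; $B_{j10}\ne B_{j11}$ for all $0<j\le n-1$. (3) $\mathbf B\in S_3$ iff there is $t\in\{1,\dots,n-1\}$ with $B_{i10}=B_{i11}=1$ for all $i\le t$ and $B_{i10}\ne B_{i11}$ for all $i>t$; $B_{i00}\ne B_{i01}$ for all $i\in[n]$; and there exist $i,j$ with $B_{i00}=B_{j01}=1$. Vertex map: for $\mathbf B\in S$, set $\alpha=-\gamma_0-\gamma_t$ if $\mathbf B\in S_1$, $\alpha=-\gamma_0-\gamma_{n-1}$ if $\mathbf B\in S_2$, $\alpha=-\gamma_t-\gamma_{n-1}$ if $\mathbf B\in S_3$ ($t$ as in the respective definition), and define $\mathbf u(\mathbf B)$ by: $u_{i00}=-\gamma_i-\alpha$ if $B_{i00}=1$, else $\gamma_0$; $u_{i10}=\gamma_i$ if $B_{i10}=1$, else $-\gamma_{n-1}-\alpha$; $u_{i01}=-\gamma_i$ if $B_{i01}=1$, else $\gamma_0+\alpha$; $u_{i11}=\gamma_i+\alpha$ if $B_{i11}=1$, else $-\gamma_{n-1}$. *)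

theory Defs
  imports Main "HOL.Real"
begin

(* Vectors v = (v_ydz), y in [n], d,z in {0,1}, are represented as functions
   nat => nat => nat => real; only entries with y < n, d <= 1, z <= 1 matter. *)
type_synonym vec = "nat \<Rightarrow> nat \<Rightarrow> nat \<Rightarrow> real"
(* Binary arrays B = (B_ydz), value 1 represented by True. *)
type_synonym sig = "nat \<Rightarrow> nat \<Rightarrow> nat \<Rightarrow> bool"

definition Mv :: "vec \<Rightarrow> nat \<Rightarrow> nat \<Rightarrow> nat \<Rightarrow> nat \<Rightarrow> real" where
  "Mv v i j d0 d1 =
     (if d0 = 0 then v i 0 0 else v j 1 0) + (if d1 = 0 then v i 0 1 else v j 1 1)"

definition M_equiv :: "nat \<Rightarrow> vec \<Rightarrow> vec \<Rightarrow> bool" where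
  "M_equiv n v1 v2 \<longleftrightarrow>
     (\<forall>i<n. \<forall>j<n. \<forall>d0\<le>1. \<forall>d1\<le>1. Mv v1 i j d0 d1 = Mv v2 i j d0 d1)"

definition inH :: "nat \<Rightarrow> (nat \<Rightarrow> real) \<Rightarrow> vec \<Rightarrow> bool" where
  "inH n \<gamma> v \<longleftrightarrow>
     (\<forall>i<n. \<forall>j<n. \<forall>d0\<le>1. \<forall>d1\<le>1. Mv v i j d0 d1 \<le> \<gamma> j - \<gamma> i)"

definition is_vertex :: "nat \<Rightarrow> (nat \<Rightarrow> real) \<Rightarrow> vec \<Rightarrow> bool" where
  "is_vertex n \<gamma> v \<longleftrightarrow> inH n \<gamma> v \<and>
     (\<forall>lam v1 v2. 0 < lam \<and> lam < 1 \<and> inH n \<gamma> v1 \<and> inH n \<gamma> v2 \<and>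
        (\<forall>y<n. \<forall>d\<le>1. \<forall>z\<le>1. v y d z = lam * v1 y d z + (1 - lam) * v2 y d z)
        \<longrightarrow> M_equiv n v1 v \<and> M_equiv n v2 v)"

definition S1 :: "nat \<Rightarrow> nat \<Rightarrow> sig \<Rightarrow> bool" where
  "S1 n t B \<longleftrightarrow> t + 2 \<le> n \<and>
     (\<forall>i. t \<le> i \<and> i < n \<longrightarrow> B i 0 0 \<and> B i 0 1) \<and>
     (\<forall>i<t. B i 0 0 \<noteq> B i 0 1) \<and>
     (\<forall>i<n. B i 1 0 \<noteq> B i 1 1) \<and>
     (\<exists>i<n. \<exists>j<n. B i 1 0 \<and> B j 1 1)"

definition S2 :: "nat \<Rightarrow> sig \<Rightarrow> bool" where
  "S2 n B \<longleftrightarrow>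
     B (n - 1) 0 0 \<and> B (n - 1) 0 1 \<and> B 0 1 0 \<and> B 0 1 1 \<and>
     (\<forall>i. i < n - 1 \<longrightarrow> B i 0 0 \<noteq> B i 0 1) \<and>
     (\<forall>j. 0 < j \<and> j \<le> n - 1 \<longrightarrow> B j 1 0 \<noteq> B j 1 1)"

definition S3 :: "nat \<Rightarrow> nat \<Rightarrow> sig \<Rightarrow> bool" where
  "S3 n t B \<longleftrightarrow> 1 \<le> t \<and> t \<le> n - 1 \<and>
     (\<forall>i\<le>t. B i 1 0 \<and> B i 1 1) \<and>
     (\<forall>i. t < i \<and> i < n \<longrightarrow> B i 1 0 \<noteq> B i 1 1) \<and>
     (\<forall>i<n. B i 0 0 \<noteq> B i 0 1) \<and>
     (\<exists>i<n. \<exists>j<n. B i 0 0 \<and> B j 0 1)"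

definition uvec :: "nat \<Rightarrow> (nat \<Rightarrow> real) \<Rightarrow> real \<Rightarrow> sig \<Rightarrow> vec" where
  "uvec n \<gamma> \<alpha> B y d z =
     (if y < n then
        (if d = 0 \<and> z = 0 then (if B y 0 0 then - \<gamma> y - \<alpha> else \<gamma> 0)
         else if d = 1 \<and> z = 0 then (if B y 1 0 then \<gamma> y else - \<gamma> (n - 1) - \<alpha>)
         else if d = 0 \<and> z = 1 then (if B y 0 1 then - \<gamma> y else \<gamma> 0 + \<alpha>)
         else if d = 1 \<and> z = 1 then (if B y 1 1 then \<gamma> y + \<alpha> else - \<gamma> (n - 1))
         else 0)
      else 0)"

definition Vset :: "nat \<Rightarrow> (nat \<Rightarrow> real) \<Rightarrow> vec set" where
  "Vset n \<gamma> =
     {uvec n \<gamma> (- \<gamma> 0 - \<gamma> t) B | t B. S1 n t B} \<union>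
     {uvec n \<gamma> (- \<gamma> 0 - \<gamma> (n - 1)) B | B. S2 n B} \<union>
     {uvec n \<gamma> (- \<gamma> t - \<gamma> (n - 1)) B | t B. S3 n t B}"

end

theory Submission
  imports Defs
begin

definition cA :: "(nat \<Rightarrow> real) \<Rightarrow> vec \<Rightarrow> nat \<Rightarrow> real" where "cA g v i = v i 0 0 + g i"
definition cP :: "(nat \<Rightarrow> real) \<Rightarrow> vec \<Rightarrow> nat \<Rightarrow> real" where "cP g v i = - v i 0 1 - g i"
definition cC :: "(nat \<Rightarrow> real) \<Rightarrow> vec \<Rightarrow> nat \<Rightarrow> real" where "cC g v i = v i 1 0 - g i"
definition cQ :: "(nat \<Rightarrow> real) \<Rightarrow> vec \<Rightarrow> nat \<Rightarrow> real" where "cQ g v i = g i - v i 1 1"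


lemma le1: "(d::nat) \<le> 1 \<longleftrightarrow> d = 0 \<or> d = 1" by auto

definition feas :: "nat \<Rightarrow> (nat \<Rightarrow> real) \<Rightarrow> vec \<Rightarrow> bool" where
 "feas n g v \<longleftrightarrow> (\<forall>i<n. cA g v i \<le> cP g v i + g i + g 0) \<and> (\<forall>i<n. \<forall>j<n. cC g v j \<le> cP g v i)
   \<and> (\<forall>i<n. \<forall>j<n. cA g v i \<le> cQ g v j) \<and> (\<forall>j<n. cC g v j + g j + g (n-1) \<le> cQ g v j)"

definition shift :: "nat \<Rightarrow> vec \<Rightarrow> vec \<Rightarrow> real \<Rightarrow> bool" where
 "shift n v w s \<longleftrightarrow> (\<forall>i<n. w i 0 0 = v i 0 0 + s \<and> w i 0 1 = v i 0 1 - s \<and> w i 1 0 = v i 1 0 + s \<and> w i 1 1 = v i 1 1 - s)"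


definition struct :: "nat \<Rightarrow> (nat\<Rightarrow>real) \<Rightarrow> vec \<Rightarrow> real \<Rightarrow> real \<Rightarrow> bool" where
"struct n g v K L \<longleftrightarrow> feas n g v \<and>
 (\<forall>i<n. (cA g v i = L \<or> (cP g v i = K \<and> cA g v i = K + g i + g 0)) \<and> (cP g v i = K \<or> (cA g v i = L \<and> cP g v i = L - g i - g 0))) \<and>
 (\<forall>j<n. (cC g v j = K \<or> (cQ g v j = L \<and> cC g v j = L - g j - g (n-1))) \<and> (cQ g v j = L \<or> (cC g v j = K \<and> cQ g v j = K + g j + g (n-1)))) \<and>
 (\<exists>i<n. cA g v i = L) \<and> (\<exists>j<n. cQ g v j = L) \<and> (\<exists>i<n. cP g v i = K) \<and> (\<exists>j<n. cC g v j = K) \<and>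
 ((\<exists>i<n. L = K + g i + g 0) \<or> (\<exists>j<n. L = K + g j + g (n-1)))"

context
  fixes n :: nat and g :: "nat \<Rightarrow> real"
  assumes n1: "1 \<le> n" and mono: "\<And>i j. i < j \<Longrightarrow> j < n \<Longrightarrow> g i < g j"
begin

lemma monole: "i \<le> j \<Longrightarrow> j < n \<Longrightarrow> g i \<le> g j"
  using mono[of i j] by (cases "i = j") auto

lemma mono_iff: "i < n \<Longrightarrow> j < n \<Longrightarrow> g i < g j \<longleftrightarrow> i < j"
  using mono[of i j] mono[of j i] by (metis less_asym' linorder_neqE_nat order_less_irrefl)

lemma mono_le_iff: "i < n \<Longrightarrow> j < n \<Longrightarrow> g i \<le> g j \<longleftrightarrow> i \<le> j"
  using mono_iff[of j i] by (simp add: not_less[symmetric])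

lemma inH_feas: "inH n g v \<longleftrightarrow> feas n g v"
proof
  assume h: "inH n g v"
  have nn: "n - 1 < n" using n1 by simp
  have z: "0 < n" using n1 by simp
  show "feas n g v" unfolding feas_def
  proof (intro conjI allI impI)
    fix i assume i: "i < n"
    show "cA g v i \<le> cP g v i + g i + g 0" using h[unfolded inH_def, rule_format, OF i z, of 0 0]
      by (simp add: cA_def cP_def Mv_def)
  next
    fix i j assume i: "i < n" and j: "j < n"
    show "cC g v j \<le> cP g v i" using h[unfolded inH_def, rule_format, OF i j, of 1 0] 
      by (simp add: cC_def cP_def Mv_def)
    show "cA g v i \<le> cQ g v j" using h[unfolded inH_def, rule_format, OF i j, of 0 1] 
      by (simp add: cA_def cQ_def Mv_def)
  next
    fix j assume j: "j < n"
    show "cC g v j + g j + g (n-1) \<le> cQ g v j" using h[unfolded inH_def, rule_format, OF nn j, of 1 1] 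
      by (simp add: cC_def cQ_def Mv_def)
  qed
next
  assume h: "feas n g v"
  show "inH n g v" unfolding inH_def
  proof (intro allI impI)
    fix i j d0 d1 :: nat assume i: "i < n" and j: "j < n" and d0: "d0 \<le> 1" and d1: "d1 \<le> 1"
    have g0: "g 0 \<le> g j" using monole[of 0 j] j by simp
    have gn: "g i \<le> g (n-1)" using monole[of i "n-1"] i by simp
    have f1: "cA g v i \<le> cP g v i + g i + g 0" and f2: "cC g v j \<le> cP g v i"
      and f3: "cA g v i \<le> cQ g v j" and f4: "cC g v j + g j + g (n-1) \<le> cQ g v j"
      using h i j unfolding feas_def by blast+
    from d0 d1 consider "d0 = 0" "d1 = 0" | "d0 = 1" "d1 = 0" | "d0 = 0" "d1 = 1" | "d0 = 1" "d1 = 1"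
      using le1[of d0] le1[of d1] by auto
    then show "Mv v i j d0 d1 \<le> g j - g i"
    proof cases
      case 1 then show ?thesis using f1 g0 by (simp add: Mv_def cA_def cP_def)
    next
      case 2 then show ?thesis using f2 by (simp add: Mv_def cC_def cP_def)
    next
      case 3 then show ?thesis using f3 by (simp add: Mv_def cA_def cQ_def)
    next
      case 4 then show ?thesis using f4 gn by (simp add: Mv_def cC_def cQ_def)
    qed
  qed
qed

lemma shift_equiv: assumes "shift n v w s" shows "M_equiv n v w"
  unfolding M_equiv_def
proof (intro allI impI)
  fix i j d0 d1 :: nat assume i: "i < n" and j: "j < n" and d0: "d0 \<le> 1" and d1: "d1 \<le> 1"
  have hi: "w i 0 0 = v i 0 0 + s \<and> w i 0 1 = v i 0 1 - s \<and> w i 1 0 = v i 1 0 + s \<and> w i 1 1 = v i 1 1 - s"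
    using assms i unfolding shift_def by blast
  have hj: "w j 0 0 = v j 0 0 + s \<and> w j 0 1 = v j 0 1 - s \<and> w j 1 0 = v j 1 0 + s \<and> w j 1 1 = v j 1 1 - s"
    using assms j unfolding shift_def by blast
  from d0 d1 hi hj show "Mv v i j d0 d1 = Mv w i j d0 d1" by (auto simp: le1 Mv_def)
qed

lemma equiv_shift: assumes "M_equiv n v w" shows "shift n v w (w 0 0 0 - v 0 0 0)"
proof -
  have z: "0 < n" using n1 by simp
  have e: "\<And>i j d0 d1. i < n \<Longrightarrow> j < n \<Longrightarrow> d0 \<le> 1 \<Longrightarrow> d1 \<le> 1 \<Longrightarrow> Mv v i j d0 d1 = Mv w i j d0 d1"
    using assms unfolding M_equiv_def by blast
  show ?thesis unfolding shift_def
  proof (intro allI impI conjI)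
    fix i assume i: "i < n"
    have a: "w 0 1 1 = v 0 1 1 - (w 0 0 0 - v 0 0 0)" using e[OF z z, of 0 1] by (simp add: Mv_def)
    show b: "w i 0 0 = v i 0 0 + (w 0 0 0 - v 0 0 0)" using e[OF i z, of 0 1] a by (simp add: Mv_def)
    show "w i 0 1 = v i 0 1 - (w 0 0 0 - v 0 0 0)" using e[OF i z, of 0 0] b by (simp add: Mv_def)
    show "w i 1 1 = v i 1 1 - (w 0 0 0 - v 0 0 0)" using e[OF z i, of 0 1] by (simp add: Mv_def)
    have c: "w 0 0 1 = v 0 0 1 - (w 0 0 0 - v 0 0 0)" using e[OF z z, of 0 0] by (simp add: Mv_def)
    show "w i 1 0 = v i 1 0 + (w 0 0 0 - v 0 0 0)" using e[OF z i, of 1 0] c by (simp add: Mv_def)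
  qed
qed

lemma Mv_lin: "Mv (\<lambda>y d z. v y d z + t * w y d z) i j d0 d1 = Mv v i j d0 d1 + t * Mv w i j d0 d1"
  by (simp add: Mv_def algebra_simps)

lemma conn:
  assumes vx: "is_vertex n g v" and i0: "i0 < n" and j0: "j0 < n" and d00: "d00 \<le> (1::nat)" and d10: "d10 \<le> (1::nat)"
    and nz: "Mv \<delta> i0 j0 d00 d10 \<noteq> 0"
  shows "\<exists>i<n. \<exists>j<n. \<exists>d0\<le>(1::nat). \<exists>d1\<le>(1::nat). Mv \<delta> i j d0 d1 \<noteq> 0 \<and> Mv v i j d0 d1 = g j - g i"
proof (rule ccontr)
  assume nt: "\<not> ?thesis"
  have vH: "inH n g v" using vx unfolding is_vertex_def by blast
  define E where "E = {(i,j,d0,d1). i<n \<and> j<n \<and> d0 \<le> 1 \<and> d1 \<le> (1::nat) \<and> Mv \<delta> i j d0 d1 \<noteq> 0}"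
  define f where "f = (\<lambda>(i,j,d0,d1). (g j - g i - Mv v i j d0 d1) / \<bar>Mv \<delta> i j d0 d1\<bar>)"
  define t where "t = Min (f ` E)"
  have finE: "finite E"
    by (rule finite_subset[of _ "{..<n} \<times> {..<n} \<times> {..(1::nat)} \<times> {..(1::nat)}"]) (auto simp: E_def)
  have inE: "(i0,j0,d00,d10) \<in> E" using i0 j0 d00 d10 nz by (simp add: E_def)
  have fpos: "\<And>e. e \<in> E \<Longrightarrow> 0 < f e"
  proof -
    fix e assume e: "e \<in> E"
    obtain i j d0 d1 where ee: "e = (i,j,d0,d1)" by (cases e) auto
    have c: "i<n" "j<n" "d0 \<le> 1" "d1 \<le> 1" "Mv \<delta> i j d0 d1 \<noteq> 0" using e ee by (auto simp: E_def)
    have "Mv v i j d0 d1 \<le> g j - g i" using vH c unfolding inH_def by blast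
    moreover have "Mv v i j d0 d1 \<noteq> g j - g i" using nt c by blast
    ultimately show "0 < f e" using c(5) by (simp add: ee f_def)
  qed
  have tpos: "0 < t" unfolding t_def using finE inE fpos by (subst Min_gr_iff) auto
  have tle: "\<And>e. e \<in> E \<Longrightarrow> t \<le> f e" unfolding t_def using finE by (intro Min_le) auto
  define v1 where "v1 = (\<lambda>y d z. v y d z + t * \<delta> y d z)"
  define v2 where "v2 = (\<lambda>y d z. v y d z + (-t) * \<delta> y d z)"
  have H: "inH n g (\<lambda>y d z. v y d z + s * \<delta> y d z)" if s: "\<bar>s\<bar> = t" for s
    unfolding inH_def
  proof (intro allI impI)
    fix i j d0 d1 :: nat assume c: "i<n" "j<n" "d0 \<le> 1" "d1 \<le> 1"
    have le: "Mv v i j d0 d1 \<le> g j - g i" using vH c unfolding inH_def by blast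
    show "Mv (\<lambda>y d z. v y d z + s * \<delta> y d z) i j d0 d1 \<le> g j - g i"
    proof (cases "Mv \<delta> i j d0 d1 = 0")
      case True then show ?thesis using le by (simp add: Mv_lin)
    next
      case False
      then have "(i,j,d0,d1) \<in> E" using c by (simp add: E_def)
      then have "t \<le> (g j - g i - Mv v i j d0 d1) / \<bar>Mv \<delta> i j d0 d1\<bar>" using tle by (force simp: f_def)
      then have "t * \<bar>Mv \<delta> i j d0 d1\<bar> \<le> g j - g i - Mv v i j d0 d1" using False by (simp add: le_divide_eq)
      moreover have "s * Mv \<delta> i j d0 d1 \<le> t * \<bar>Mv \<delta> i j d0 d1\<bar>"
        using s by (metis abs_ge_self abs_mult)
      ultimately show ?thesis by (simp add: Mv_lin)
    qed
  qed
  have H1: "inH n g v1" unfolding v1_def using H[of t] tpos by simp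
  have H2: "inH n g v2" unfolding v2_def using H[of "-t"] tpos by simp
  have comb: "\<forall>y<n. \<forall>d\<le>1. \<forall>z\<le>1. v y d z = (1/2) * v1 y d z + (1 - 1/2) * v2 y d z"
    by (simp add: v1_def v2_def algebra_simps)
  have half: "(0::real) < 1/2" "(1/2::real) < 1" by simp_all
  have "M_equiv n v1 v" using conjunct2[OF vx[unfolded is_vertex_def], rule_format, of "1/2" v1 v2] half H1 H2 comb
    by blast
  then have "Mv v1 i0 j0 d00 d10 = Mv v i0 j0 d00 d10" using i0 j0 d00 d10 unfolding M_equiv_def by blast
  then show False using nz tpos by (simp add: v1_def Mv_lin)
qed

definition dl :: "(nat\<Rightarrow>bool) \<Rightarrow> (nat\<Rightarrow>bool) \<Rightarrow> (nat\<Rightarrow>bool) \<Rightarrow> (nat\<Rightarrow>bool) \<Rightarrow> vec" where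
 "dl SA SP SC SQ y d z = (if d = 0 \<and> z = 0 then (if SA y then 1 else 0) else if d = 0 then (if SP y then -1 else 0)
    else if z = 0 then (if SC y then 1 else 0) else (if SQ y then -1 else 0))"

lemma dl00: "Mv (dl SA SP SC SQ) i j 0 0 \<noteq> 0 \<longleftrightarrow> SA i \<noteq> SP i" by (simp add: Mv_def dl_def)
lemma dl10: "Mv (dl SA SP SC SQ) i j 1 0 \<noteq> 0 \<longleftrightarrow> SC j \<noteq> SP i" by (simp add: Mv_def dl_def)
lemma dl01: "Mv (dl SA SP SC SQ) i j 0 1 \<noteq> 0 \<longleftrightarrow> SA i \<noteq> SQ j" by (simp add: Mv_def dl_def)
lemma dl11: "Mv (dl SA SP SC SQ) i j 1 1 \<noteq> 0 \<longleftrightarrow> SC j \<noteq> SQ j" by (simp add: Mv_def dl_def)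

lemma conn4:
  fixes SA SP SC SQ :: "nat \<Rightarrow> bool"
  assumes vx: "is_vertex n g v"
    and cr: "(\<exists>i<n. SA i \<noteq> SP i) \<or> (\<exists>i<n. \<exists>j<n. SC j \<noteq> SP i) \<or> (\<exists>i<n. \<exists>j<n. SA i \<noteq> SQ j) \<or> (\<exists>j<n. SC j \<noteq> SQ j)"
  shows "(\<exists>i<n. SA i \<noteq> SP i \<and> cA g v i = cP g v i + g i + g 0) \<or> (\<exists>i<n. \<exists>j<n. SC j \<noteq> SP i \<and> cC g v j = cP g v i)
    \<or> (\<exists>i<n. \<exists>j<n. SA i \<noteq> SQ j \<and> cA g v i = cQ g v j) \<or> (\<exists>j<n. SC j \<noteq> SQ j \<and> cQ g v j = cC g v j + g j + g (n-1))"
proof -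
  let ?d = "dl SA SP SC SQ"
  have z: "0 < n" using n1 by simp
  have nn: "n - 1 < n" using n1 by simp
  have vH: "inH n g v" using vx unfolding is_vertex_def by blast
  have "\<exists>i0<n. \<exists>j0<n. \<exists>d00\<le>(1::nat). \<exists>d10\<le>(1::nat). Mv ?d i0 j0 d00 d10 \<noteq> 0"
    using cr
  proof (elim disjE exE conjE)
    fix i assume "i < n" "SA i \<noteq> SP i" then show ?thesis using z dl00[of SA SP SC SQ i 0] by fastforce
  next
    fix i j assume "i < n" "j < n" "SC j \<noteq> SP i" then show ?thesis using dl10[of SA SP SC SQ i j] by fastforce
  next
    fix i j assume "i < n" "j < n" "SA i \<noteq> SQ j" then show ?thesis using dl01[of SA SP SC SQ i j] by fastforce
  next
    fix j assume "j < n" "SC j \<noteq> SQ j" then show ?thesis using z dl11[of SA SP SC SQ 0 j] by fastforce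
  qed
  then obtain i0 j0 d00 d10 where e: "i0 < n" "j0 < n" "d00 \<le> (1::nat)" "d10 \<le> (1::nat)" "Mv ?d i0 j0 d00 d10 \<noteq> 0"
    by blast
  from conn[OF vx e] obtain i j and d0 d1 :: nat where
    c: "i < n" "j < n" "d0 \<le> 1" "d1 \<le> 1" "Mv ?d i j d0 d1 \<noteq> 0" "Mv v i j d0 d1 = g j - g i"
    by blast
  have g0: "g 0 \<le> g j" using monole[of 0 j] c by simp
  have gn: "g i \<le> g (n-1)" using monole[of i "n-1"] c by simp
  have f00: "Mv v i 0 0 0 \<le> g 0 - g i" using vH c z unfolding inH_def by blast
  have f11: "Mv v (n-1) j 1 1 \<le> g j - g (n-1)" using vH c nn unfolding inH_def by blast
  from c(3,4) consider "d0 = 0" "d1 = 0" | "d0 = 1" "d1 = 0" | "d0 = 0" "d1 = 1" | "d0 = 1" "d1 = 1"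
      using le1[of d0] le1[of d1] by auto
  then show ?thesis
  proof cases
    case 1
    then have "SA i \<noteq> SP i" using c dl00 by metis
    moreover have "cA g v i = cP g v i + g i + g 0" using c 1 f00 g0 by (simp add: Mv_def cA_def cP_def)
    ultimately show ?thesis using c by blast
  next
    case 2
    then have "SC j \<noteq> SP i" using c dl10 by metis
    moreover have "cC g v j = cP g v i" using c 2 by (simp add: Mv_def cC_def cP_def)
    ultimately show ?thesis using c by blast
  next
    case 3
    then have "SA i \<noteq> SQ j" using c dl01 by metis
    moreover have "cA g v i = cQ g v j" using c 3 by (simp add: Mv_def cA_def cQ_def)
    ultimately show ?thesis using c by blast
  next
    case 4
    then have "SC j \<noteq> SQ j" using c dl11 by metis
    moreover have "cQ g v j = cC g v j + g j + g (n-1)" using c 4 f11 gn by (simp add: Mv_def cC_def cQ_def)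
    ultimately show ?thesis using c by blast
  qed
qed

lemma vertex_struct:
  assumes vx: "is_vertex n g v"
  shows "\<exists>K L. struct n g v K L"
proof -
  let ?A = "cA g v" and ?P = "cP g v" and ?C = "cC g v" and ?Q = "cQ g v"
  have z: "0 < n" using n1 by simp
  have nn: "n - 1 < n" using n1 by simp
  have vH: "inH n g v" using vx unfolding is_vertex_def by blast
  then have fe: "feas n g v" using inH_feas by blast
  have F1: "\<And>i. i<n \<Longrightarrow> ?A i \<le> ?P i + g i + g 0" using fe unfolding feas_def by blast
  have F2: "\<And>i j. i<n \<Longrightarrow> j<n \<Longrightarrow> ?C j \<le> ?P i" using fe unfolding feas_def by blast
  have F3: "\<And>i j. i<n \<Longrightarrow> j<n \<Longrightarrow> ?A i \<le> ?Q j" using fe unfolding feas_def by blast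
  have F4: "\<And>j. j<n \<Longrightarrow> ?C j + g j + g (n-1) \<le> ?Q j" using fe unfolding feas_def by blast
  have nA: "?A i = ?P i + g i + g 0 \<or> (\<exists>j<n. ?A i = ?Q j)" if i: "i < n" for i
    using conn4[OF vx, of "\<lambda>k. k = i" "\<lambda>k. False" "\<lambda>k. False" "\<lambda>k. False"] i by auto
  have nP: "?A i = ?P i + g i + g 0 \<or> (\<exists>j<n. ?C j = ?P i)" if i: "i < n" for i
    using conn4[OF vx, of "\<lambda>k. False" "\<lambda>k. k = i" "\<lambda>k. False" "\<lambda>k. False"] i by auto
  have nC: "?Q j = ?C j + g j + g (n-1) \<or> (\<exists>i<n. ?C j = ?P i)" if j: "j < n" for j
    using conn4[OF vx, of "\<lambda>k. False" "\<lambda>k. False" "\<lambda>k. k = j" "\<lambda>k. False"] j by auto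
  have nQ: "?Q j = ?C j + g j + g (n-1) \<or> (\<exists>i<n. ?A i = ?Q j)" if j: "j < n" for j
    using conn4[OF vx, of "\<lambda>k. False" "\<lambda>k. False" "\<lambda>k. False" "\<lambda>k. k = j"] j by auto
  have "\<exists>i<n. \<exists>j<n. ?A i = ?Q j"
  proof (rule ccontr)
    assume h: "\<not> ?thesis"
    have a: "?A (n-1) = ?P (n-1) + g (n-1) + g 0" using nA[OF nn] h nn by blast
    have b: "?Q 0 = ?C 0 + g 0 + g (n-1)" using nQ[OF z] h z by auto
    have "?C 0 \<le> ?P (n-1)" "?A (n-1) \<le> ?Q 0" using F2[OF nn z] F3[OF nn z] by auto
    then have "?A (n-1) = ?Q 0" using a b by linarith
    then show False using h nn z by blast
  qed
  then obtain i1 j1 where ij1: "i1 < n" "j1 < n" "?A i1 = ?Q j1" by blast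
  have "\<exists>i<n. \<exists>j<n. ?C j = ?P i"
  proof (rule ccontr)
    assume h: "\<not> ?thesis"
    have a: "?A (n-1) = ?P (n-1) + g (n-1) + g 0" using nP[OF nn] h nn by blast
    have b: "?Q 0 = ?C 0 + g 0 + g (n-1)" using nC[OF z] h z by auto
    have "?C 0 \<le> ?P (n-1)" "?A (n-1) \<le> ?Q 0" using F2[OF nn z] F3[OF nn z] by auto
    then have "?C 0 = ?P (n-1)" using a b by linarith
    then show False using h nn z by blast
  qed
  then obtain i2 j2 where ij2: "i2 < n" "j2 < n" "?C j2 = ?P i2" by blast
  define L where "L = ?A i1"
  define K where "K = ?C j2"
  have Ale: "\<And>i. i < n \<Longrightarrow> ?A i \<le> L" using F3 ij1 unfolding L_def by metis
  have Qge: "\<And>j. j < n \<Longrightarrow> L \<le> ?Q j" using F3 ij1 unfolding L_def by metis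
  have Cle: "\<And>j. j < n \<Longrightarrow> ?C j \<le> K" using F2 ij2 unfolding K_def by metis
  have Pge: "\<And>i. i < n \<Longrightarrow> K \<le> ?P i" using F2 ij2 unfolding K_def by metis
  have AQL: "\<And>i j. i < n \<Longrightarrow> j < n \<Longrightarrow> ?A i = ?Q j \<Longrightarrow> ?A i = L \<and> ?Q j = L"
    using Ale Qge by (metis order_antisym)
  have CPK: "\<And>i j. i < n \<Longrightarrow> j < n \<Longrightarrow> ?C j = ?P i \<Longrightarrow> ?C j = K \<and> ?P i = K"
    using Cle Pge by (metis order_antisym)
  have pairA: "?A i = L \<or> ?P i = K" if i: "i < n" for i
  proof -
    have "(\<exists>i'<n. \<exists>j<n. False \<noteq> (i' = i) \<and> ?C j = ?P i') \<or> (\<exists>i'<n. \<exists>j<n. (i' = i) \<noteq> False \<and> ?A i' = ?Q j)"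
      using conn4[OF vx, of "\<lambda>k. k = i" "\<lambda>k. k = i" "\<lambda>k. False" "\<lambda>k. False"] i z by auto
    then show ?thesis using AQL CPK i by auto
  qed
  have pairC: "?C j = K \<or> ?Q j = L" if j: "j < n" for j
  proof -
    have "(\<exists>i<n. \<exists>j'<n. (j' = j) \<noteq> False \<and> ?C j' = ?P i) \<or> (\<exists>i<n. \<exists>j'<n. False \<noteq> (j' = j) \<and> ?A i = ?Q j')"
      using conn4[OF vx, of "\<lambda>k. False" "\<lambda>k. False" "\<lambda>k. k = j" "\<lambda>k. k = j"] j z by auto
    then show ?thesis using AQL CPK j by auto
  qed
  have bridge: "(\<exists>i<n. L = K + g i + g 0) \<or> (\<exists>j<n. L = K + g j + g (n-1))"
  proof -
    have cr: "(\<exists>i<n. (?A i = L) \<noteq> (?P i \<noteq> K)) \<or> (\<exists>i<n. \<exists>j<n. (?C j \<noteq> K) \<noteq> (?P i \<noteq> K))"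
    proof (cases "?P i1 = K")
      case True then show ?thesis using ij1 L_def by auto
    next
      case False then show ?thesis using ij1 ij2 K_def by auto
    qed
    have "(\<exists>i<n. (?A i = L) \<noteq> (?P i \<noteq> K) \<and> ?A i = ?P i + g i + g 0) \<or> (\<exists>i<n. \<exists>j<n. (?C j \<noteq> K) \<noteq> (?P i \<noteq> K) \<and> ?C j = ?P i)
    \<or> (\<exists>i<n. \<exists>j<n. (?A i = L) \<noteq> (?Q j = L) \<and> ?A i = ?Q j) \<or> (\<exists>j<n. (?C j \<noteq> K) \<noteq> (?Q j = L) \<and> ?Q j = ?C j + g j + g (n-1))"
      using conn4[OF vx, of "\<lambda>i. ?A i = L" "\<lambda>i. ?P i \<noteq> K" "\<lambda>j. ?C j \<noteq> K" "\<lambda>j. ?Q j = L"] cr by blast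
    then show ?thesis
    proof (elim disjE exE conjE)
      fix i assume i: "i < n" "(?A i = L) \<noteq> (?P i \<noteq> K)" "?A i = ?P i + g i + g 0"
      then show ?thesis using pairA[OF i(1)] by auto
    next
      fix i j assume "i < n" "j < n" "(?C j \<noteq> K) \<noteq> (?P i \<noteq> K)" "?C j = ?P i"
      then show ?thesis using CPK by blast
    next
      fix i j assume "i < n" "j < n" "(?A i = L) \<noteq> (?Q j = L)" "?A i = ?Q j"
      then show ?thesis using AQL by blast
    next
      fix j assume j: "j < n" "(?C j \<noteq> K) \<noteq> (?Q j = L)" "?Q j = ?C j + g j + g (n-1)"
      then show ?thesis using pairC[OF j(1)] by auto
    qed
  qed
  have "struct n g v K L" unfolding struct_def
  proof (intro conjI allI impI)
    show "feas n g v" by (rule fe)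
  next
    fix i assume i: "i < n"
    show "?A i = L \<or> (?P i = K \<and> ?A i = K + g i + g 0)"
      using pairA[OF i] nA[OF i] AQL i by auto
    show "?P i = K \<or> (?A i = L \<and> ?P i = L - g i - g 0)"
      using pairA[OF i] nP[OF i] CPK i by auto
  next
    fix j assume j: "j < n"
    show "?C j = K \<or> (?Q j = L \<and> ?C j = L - g j - g (n-1))"
      using pairC[OF j] nC[OF j] CPK j by auto
    show "?Q j = L \<or> (?C j = K \<and> ?Q j = K + g j + g (n-1))"
      using pairC[OF j] nQ[OF j] AQL j by auto
  next
    show "\<exists>i<n. ?A i = L" using ij1 L_def by blast
    show "\<exists>j<n. ?Q j = L" using ij1 L_def by auto
    show "\<exists>i<n. ?P i = K" using ij2 K_def by auto
    show "\<exists>j<n. ?C j = K" using ij2 K_def by blast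
    show "(\<exists>i<n. L = K + g i + g 0) \<or> (\<exists>j<n. L = K + g j + g (n-1))" by (rule bridge)
  qed
  then show ?thesis by blast
qed

lemma M_equiv_sym: "M_equiv n v w \<Longrightarrow> M_equiv n w v"
  unfolding M_equiv_def by metis

lemma tight_pres:
  assumes H1: "inH n g v1" and H2: "inH n g v2" and lam: "0 < lam" "lam < 1"
    and comb: "\<forall>y<n. \<forall>d\<le>1. \<forall>z\<le>1. v y d z = lam * v1 y d z + (1 - lam) * v2 y d z"
    and c: "i < n" "j < n" "d0 \<le> 1" "d1 \<le> 1" and t: "Mv v i j d0 d1 = g j - g i"
  shows "Mv v1 i j d0 d1 = g j - g i"
proof -
  have e: "\<And>y d z. y < n \<Longrightarrow> d \<le> 1 \<Longrightarrow> z \<le> 1 \<Longrightarrow> v y d z = lam * v1 y d z + (1 - lam) * v2 y d z"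
    using comb by blast
  have "Mv v i j d0 d1 = lam * Mv v1 i j d0 d1 + (1 - lam) * Mv v2 i j d0 d1"
    using e[of i 0 0] e[of i 0 1] e[of j 1 0] e[of j 1 1] c by (simp add: Mv_def algebra_simps)
  moreover have "Mv v1 i j d0 d1 \<le> g j - g i" "Mv v2 i j d0 d1 \<le> g j - g i"
    using H1 H2 c unfolding inH_def by blast+
  moreover have "(1 - lam) * Mv v2 i j d0 d1 \<le> (1 - lam) * (g j - g i)"
    using calculation(3) lam by (intro mult_left_mono) auto
  ultimately have "lam * (g j - g i) \<le> lam * Mv v1 i j d0 d1" using t by (simp add: algebra_simps)
  then have "g j - g i \<le> Mv v1 i j d0 d1" using lam by simp
  then show ?thesis using \<open>Mv v1 i j d0 d1 \<le> g j - g i\<close> by linarith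
qed

lemma struct_side:
  assumes st: "struct n g v K L" and H1: "inH n g v1" and H2: "inH n g v2" and lam: "0 < lam" "lam < 1"
    and comb: "\<forall>y<n. \<forall>d\<le>1. \<forall>z\<le>1. v y d z = lam * v1 y d z + (1 - lam) * v2 y d z"
  shows "M_equiv n v1 v"
proof -
  let ?A = "cA g v" and ?P = "cP g v" and ?C = "cC g v" and ?Q = "cQ g v"
  let ?A1 = "cA g v1" and ?P1 = "cP g v1" and ?C1 = "cC g v1" and ?Q1 = "cQ g v1"
  have z: "0 < n" using n1 by simp
  have nn: "n - 1 < n" using n1 by simp
  note tp = tight_pres[OF H1 H2 lam comb]
  have tAQ: "?A1 i = ?Q1 j" if "i < n" "j < n" "?A i = ?Q j" for i j
    using tp[of i j 0 1] that by (simp add: Mv_def cA_def cQ_def)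
  have tCP: "?C1 j = ?P1 i" if "i < n" "j < n" "?C j = ?P i" for i j
    using tp[of i j 1 0] that by (simp add: Mv_def cC_def cP_def)
  have tAP: "?A1 i = ?P1 i + g i + g 0" if "i < n" "?A i = ?P i + g i + g 0" for i
    using tp[of i 0 0 0] that z by (simp add: Mv_def cA_def cP_def)
  have tCQ: "?Q1 j = ?C1 j + g j + g (n-1)" if "j < n" "?Q j = ?C j + g j + g (n-1)" for j
    using tp[of "n-1" j 1 1] that nn by (simp add: Mv_def cC_def cQ_def)
  have pA: "\<And>i. i<n \<Longrightarrow> (?A i = L \<or> (?P i = K \<and> ?A i = K + g i + g 0)) \<and> (?P i = K \<or> (?A i = L \<and> ?P i = L - g i - g 0))"
    and pC: "\<And>j. j<n \<Longrightarrow> (?C j = K \<or> (?Q j = L \<and> ?C j = L - g j - g (n-1))) \<and> (?Q j = L \<or> (?C j = K \<and> ?Q j = K + g j + g (n-1)))"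
    and br: "(\<exists>i<n. L = K + g i + g 0) \<or> (\<exists>j<n. L = K + g j + g (n-1))"
    using st unfolding struct_def by blast+
  obtain i1 where i1: "i1 < n" "?A i1 = L" using st unfolding struct_def by blast
  obtain j1 where j1: "j1 < n" "?Q j1 = L" using st unfolding struct_def by blast
  obtain i2 where i2: "i2 < n" "?P i2 = K" using st unfolding struct_def by blast
  obtain j2 where j2: "j2 < n" "?C j2 = K" using st unfolding struct_def by blast
  define s where "s = ?Q1 j1 - L"
  have sA: "?A1 i = L + s" if "i < n" "?A i = L" for i
    using tAQ[of i j1] that j1 unfolding s_def by simp
  have sQ: "?Q1 j = L + s" if "j < n" "?Q j = L" for j
    using tAQ[of i1 j] that i1 sA[OF i1] by simp
  have "\<exists>i<n. ?P i = K \<and> ?P1 i = K + s"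
    using br
  proof (elim disjE exE conjE)
    fix t assume t: "t < n" "L = K + g t + g 0"
    have a: "?A t = L" "?P t = K" using pA[OF t(1)] t(2) by auto
    then have "?A1 t = ?P1 t + g t + g 0" using tAP[OF t(1)] t(2) by simp
    then have "?P1 t = K + s" using sA[OF t(1) a(1)] t(2) by simp
    then show ?thesis using a t by blast
  next
    fix t assume t: "t < n" "L = K + g t + g (n-1)"
    have a: "?C t = K" "?Q t = L" using pC[OF t(1)] t(2) by auto
    then have "?Q1 t = ?C1 t + g t + g (n-1)" using tCQ[OF t(1)] t(2) by simp
    then have "?C1 t = K + s" using sQ[OF t(1) a(2)] t(2) by simp
    moreover have "?C1 t = ?P1 i2" using tCP[OF i2(1) t(1)] a i2 by simp
    ultimately show ?thesis using i2 by auto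
  qed
  then obtain i3 where i3: "i3 < n" "?P i3 = K" "?P1 i3 = K + s" by blast
  have sC: "?C1 j = K + s" if "j < n" "?C j = K" for j
    using tCP[OF i3(1) that(1)] that i3 by simp
  have sP: "?P1 i = K + s" if "i < n" "?P i = K" for i
    using tCP[OF that(1) j2(1)] that j2 sC[OF j2] by simp
  have allA: "?A1 i = ?A i + s \<and> ?P1 i = ?P i + s" if i: "i < n" for i
  proof (cases "?A i = L")
    case True
    show ?thesis
    proof (cases "?P i = K")
      case True2: True
      then show ?thesis using sA[OF i True] sP[OF i True2] True by simp
    next
      case False
      then have "?P i = L - g i - g 0" using pA[OF i] by auto
      then have "?P1 i = ?A1 i - g i - g 0" using tAP[OF i] True by simp
      then show ?thesis using sA[OF i True] True \<open>?P i = L - g i - g 0\<close> by simp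
    qed
  next
    case False
    then have p: "?P i = K" "?A i = K + g i + g 0" using pA[OF i] by auto
    then have "?A1 i = ?P1 i + g i + g 0" using tAP[OF i] by simp
    then show ?thesis using sP[OF i p(1)] p by simp
  qed
  have allC: "?C1 j = ?C j + s \<and> ?Q1 j = ?Q j + s" if j: "j < n" for j
  proof (cases "?Q j = L")
    case True
    show ?thesis
    proof (cases "?C j = K")
      case True2: True
      then show ?thesis using sQ[OF j True] sC[OF j True2] True by simp
    next
      case False
      then have "?C j = L - g j - g (n-1)" using pC[OF j] by auto
      then have "?Q1 j = ?C1 j + g j + g (n-1)" using tCQ[OF j] True by simp
      then show ?thesis using sQ[OF j True] True \<open>?C j = L - g j - g (n-1)\<close> by simp
    qed
  next
    case False
    then have p: "?C j = K" "?Q j = K + g j + g (n-1)" using pC[OF j] by auto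
    then have "?Q1 j = ?C1 j + g j + g (n-1)" using tCQ[OF j] by simp
    then show ?thesis using sC[OF j p(1)] p by simp
  qed
  have "shift n v v1 s" unfolding shift_def
    using allA allC by (simp add: cA_def cP_def cC_def cQ_def algebra_simps)
  then show ?thesis using shift_equiv M_equiv_sym by blast
qed

lemma struct_vertex:
  assumes st: "struct n g v K L"
  shows "is_vertex n g v"
  unfolding is_vertex_def
proof (intro conjI allI impI)
  show "inH n g v" using st inH_feas unfolding struct_def by blast
next
  fix lam v1 v2
  assume h: "0 < lam \<and> lam < 1 \<and> inH n g v1 \<and> inH n g v2 \<and>
        (\<forall>y<n. \<forall>d\<le>1. \<forall>z\<le>1. v y d z = lam * v1 y d z + (1 - lam) * v2 y d z)"
  then show "M_equiv n v1 v" using struct_side[OF st] by blast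
  have "\<forall>y<n. \<forall>d\<le>1. \<forall>z\<le>1. v y d z = (1 - lam) * v2 y d z + (1 - (1 - lam)) * v1 y d z"
    using h by (simp add: algebra_simps)
  then show "M_equiv n v2 v" using struct_side[OF st, of v2 v1 "1 - lam"] h by auto
qed

lemma uvec_coords:
  assumes "y < n"
  shows "cA g (uvec n g \<alpha> B) y = (if B y 0 0 then - \<alpha> else g 0 + g y)"
    "cP g (uvec n g \<alpha> B) y = (if B y 0 1 then 0 else - \<alpha> - g 0 - g y)"
    "cC g (uvec n g \<alpha> B) y = (if B y 1 0 then 0 else - \<alpha> - g (n-1) - g y)"
    "cQ g (uvec n g \<alpha> B) y = (if B y 1 1 then - \<alpha> else g y + g (n-1))"
  using assms by (auto simp: uvec_def cA_def cP_def cC_def cQ_def)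

lemma uvec_struct:
  assumes p1: "\<forall>i<n. B i 0 0 \<or> B i 0 1" and p2: "\<forall>j<n. B j 1 0 \<or> B j 1 1"
    and c1: "\<forall>i<n. B i 0 0 \<and> B i 0 1 \<longrightarrow> D \<le> g i + g 0"
    and c2: "\<forall>i<n. \<not> (B i 0 0 \<and> B i 0 1) \<longrightarrow> g i + g 0 \<le> D"
    and c3: "\<forall>j<n. B j 1 0 \<and> B j 1 1 \<longrightarrow> g j + g (n-1) \<le> D"
    and c4: "\<forall>j<n. \<not> (B j 1 0 \<and> B j 1 1) \<longrightarrow> D \<le> g j + g (n-1)"
    and e1: "\<exists>i<n. B i 0 0" and e2: "\<exists>j<n. B j 1 1" and e3: "\<exists>i<n. B i 0 1" and e4: "\<exists>j<n. B j 1 0"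
    and br: "(\<exists>i<n. D = 0 + g i + g 0) \<or> (\<exists>j<n. D = 0 + g j + g (n-1))"
    and al: "\<alpha> = - D"
  shows "struct n g (uvec n g \<alpha> B) 0 D"
  unfolding struct_def feas_def
proof (intro conjI allI impI)
  note uc = uvec_coords[of _ \<alpha> B]
  fix i assume i: "i < n"
  show "cA g (uvec n g \<alpha> B) i \<le> cP g (uvec n g \<alpha> B) i + g i + g 0"
    using uc[OF i] p1 c1 c2 i al by auto
  show "cA g (uvec n g \<alpha> B) i = D \<or> cP g (uvec n g \<alpha> B) i = 0 \<and> cA g (uvec n g \<alpha> B) i = 0 + g i + g 0"
    using uc[OF i] p1 i al by auto
  show "cP g (uvec n g \<alpha> B) i = 0 \<or> cA g (uvec n g \<alpha> B) i = D \<and> cP g (uvec n g \<alpha> B) i = D - g i - g 0"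
    using uc[OF i] p1 i al by auto
  fix j assume j: "j < n"
  show "cC g (uvec n g \<alpha> B) j \<le> cP g (uvec n g \<alpha> B) i"
    using uc[OF i] uc[OF j] c2[rule_format, OF i] c4[rule_format, OF j] al by auto
  show "cA g (uvec n g \<alpha> B) i \<le> cQ g (uvec n g \<alpha> B) j"
    using uc[OF i] uc[OF j] c2[rule_format, OF i] c4[rule_format, OF j] al by auto
next
  note uc = uvec_coords[of _ \<alpha> B]
  fix j assume j: "j < n"
  show "cC g (uvec n g \<alpha> B) j + g j + g (n - 1) \<le> cQ g (uvec n g \<alpha> B) j"
    using uc[OF j] p2 c3 c4 j al by auto
  show "cC g (uvec n g \<alpha> B) j = 0 \<or> cQ g (uvec n g \<alpha> B) j = D \<and> cC g (uvec n g \<alpha> B) j = D - g j - g (n - 1)"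
    using uc[OF j] p2 j al by auto
  show "cQ g (uvec n g \<alpha> B) j = D \<or> cC g (uvec n g \<alpha> B) j = 0 \<and> cQ g (uvec n g \<alpha> B) j = 0 + g j + g (n - 1)"
    using uc[OF j] p2 j al by auto
next
  note uc = uvec_coords[of _ \<alpha> B]
  show "\<exists>i<n. cA g (uvec n g \<alpha> B) i = D" using e1 uc al by auto
  show "\<exists>j<n. cQ g (uvec n g \<alpha> B) j = D" using e2 uc al by auto
  show "\<exists>i<n. cP g (uvec n g \<alpha> B) i = 0" using e3 uc by auto
  show "\<exists>j<n. cC g (uvec n g \<alpha> B) j = 0" using e4 uc by auto
  show "(\<exists>i<n. D = 0 + g i + g 0) \<or> (\<exists>j<n. D = 0 + g j + g (n - 1))" by (rule br)
qed

lemma S1_struct: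
  assumes S: "S1 n t B"
  shows "struct n g (uvec n g (- g 0 - g t) B) 0 (g 0 + g t)"
proof -
  have tn: "t + 2 \<le> n" and hi: "\<forall>i. t \<le> i \<and> i < n \<longrightarrow> B i 0 0 \<and> B i 0 1"
    and lo: "\<forall>i<t. B i 0 0 \<noteq> B i 0 1" and cq: "\<forall>i<n. B i 1 0 \<noteq> B i 1 1"
    and ex: "\<exists>i<n. \<exists>j<n. B i 1 0 \<and> B j 1 1" using S unfolding S1_def by blast+
  have tl: "t < n" using tn by simp
  show ?thesis
  proof (rule uvec_struct)
    show "\<forall>i<n. B i 0 0 \<or> B i 0 1" using hi lo by (metis not_le)
    show "\<forall>j<n. B j 1 0 \<or> B j 1 1" using cq by blast
    show "\<forall>i<n. B i 0 0 \<and> B i 0 1 \<longrightarrow> g 0 + g t \<le> g i + g 0"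
      using lo monole by (metis add.commute add_le_cancel_right not_le)
    show "\<forall>i<n. \<not> (B i 0 0 \<and> B i 0 1) \<longrightarrow> g i + g 0 \<le> g 0 + g t"
      using hi monole tl by (smt (verit) not_le order_less_imp_le)
    show "\<forall>j<n. B j 1 0 \<and> B j 1 1 \<longrightarrow> g j + g (n - 1) \<le> g 0 + g t" using cq by blast
    show "\<forall>j<n. \<not> (B j 1 0 \<and> B j 1 1) \<longrightarrow> g 0 + g t \<le> g j + g (n - 1)"
    proof (intro allI impI)
      fix j assume j: "j < n"
      have "g 0 \<le> g j" using monole[of 0 j] j by simp
      moreover have "g t \<le> g (n-1)" using monole[of t "n-1"] tn by simp
      ultimately show "g 0 + g t \<le> g j + g (n - 1)" by simp
    qed
    show "\<exists>i<n. B i 0 0" "\<exists>i<n. B i 0 1" using hi tl by auto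
    show "\<exists>j<n. B j 1 1" "\<exists>j<n. B j 1 0" using ex by auto
    show "(\<exists>i<n. g 0 + g t = 0 + g i + g 0) \<or> (\<exists>j<n. g 0 + g t = 0 + g j + g (n - 1))" using tl by auto
    show "- g 0 - g t = - (g 0 + g t)" by simp
  qed
qed

lemma S2_struct:
  assumes S: "S2 n B"
  shows "struct n g (uvec n g (- g 0 - g (n-1)) B) 0 (g 0 + g (n-1))"
proof -
  have a: "B (n - 1) 0 0" "B (n - 1) 0 1" "B 0 1 0" "B 0 1 1"
    and lo: "\<forall>i. i < n - 1 \<longrightarrow> B i 0 0 \<noteq> B i 0 1" and hi: "\<forall>j. 0 < j \<and> j \<le> n - 1 \<longrightarrow> B j 1 0 \<noteq> B j 1 1"
    using S unfolding S2_def by blast+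
  have z: "0 < n" and nn: "n - 1 < n" using n1 by auto
  show ?thesis
  proof (rule uvec_struct)
    show "\<forall>i<n. B i 0 0 \<or> B i 0 1"
    proof (intro allI impI)
      fix i assume "i < n" then show "B i 0 0 \<or> B i 0 1" using lo a by (cases "i = n - 1") auto
    qed
    show "\<forall>j<n. B j 1 0 \<or> B j 1 1"
    proof (intro allI impI)
      fix j assume "j < n" then show "B j 1 0 \<or> B j 1 1" using hi a by (cases "j = 0") auto
    qed
    show "\<forall>i<n. B i 0 0 \<and> B i 0 1 \<longrightarrow> g 0 + g (n-1) \<le> g i + g 0"
    proof (intro allI impI)
      fix i assume i: "i < n" "B i 0 0 \<and> B i 0 1"
      have "\<not> i < n - 1" using lo i by blast
      then have "i = n - 1" using i by linarith
      then show "g 0 + g (n-1) \<le> g i + g 0" by simp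
    qed
    show "\<forall>i<n. \<not> (B i 0 0 \<and> B i 0 1) \<longrightarrow> g i + g 0 \<le> g 0 + g (n-1)"
      using monole by (metis add.commute add_le_cancel_right le_diff_conv2 less_eq_Suc_le n1 Suc_eq_plus1 nn)
    show "\<forall>j<n. B j 1 0 \<and> B j 1 1 \<longrightarrow> g j + g (n - 1) \<le> g 0 + g (n-1)"
    proof (intro allI impI)
      fix j assume "j < n" "B j 1 0 \<and> B j 1 1" then have "j = 0" using hi by force
      then show "g j + g (n - 1) \<le> g 0 + g (n-1)" by simp
    qed
    show "\<forall>j<n. \<not> (B j 1 0 \<and> B j 1 1) \<longrightarrow> g 0 + g (n-1) \<le> g j + g (n - 1)"
      using monole by simp
    show "\<exists>i<n. B i 0 0" "\<exists>i<n. B i 0 1" using a nn by auto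
    show "\<exists>j<n. B j 1 1" "\<exists>j<n. B j 1 0" using a z by auto
    show "(\<exists>i<n. g 0 + g (n-1) = 0 + g i + g 0) \<or> (\<exists>j<n. g 0 + g (n-1) = 0 + g j + g (n - 1))" using z by auto
    show "- g 0 - g (n-1) = - (g 0 + g (n-1))" by simp
  qed
qed

lemma S3_struct:
  assumes S: "S3 n t B"
  shows "struct n g (uvec n g (- g t - g (n-1)) B) 0 (g t + g (n-1))"
proof -
  have t1: "1 \<le> t" and tn: "t \<le> n - 1" and lo: "\<forall>i\<le>t. B i 1 0 \<and> B i 1 1"
    and hi: "\<forall>i. t < i \<and> i < n \<longrightarrow> B i 1 0 \<noteq> B i 1 1"
    and ap: "\<forall>i<n. B i 0 0 \<noteq> B i 0 1" and ex: "\<exists>i<n. \<exists>j<n. B i 0 0 \<and> B j 0 1"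
    using S unfolding S3_def by blast+
  have z: "0 < n" and nn: "n - 1 < n" and tl: "t < n" using n1 tn by auto
  show ?thesis
  proof (rule uvec_struct)
    show "\<forall>i<n. B i 0 0 \<or> B i 0 1" using ap by blast
    show "\<forall>j<n. B j 1 0 \<or> B j 1 1" using lo hi by (metis not_le)
    show "\<forall>i<n. B i 0 0 \<and> B i 0 1 \<longrightarrow> g t + g (n-1) \<le> g i + g 0" using ap by blast
    show "\<forall>i<n. \<not> (B i 0 0 \<and> B i 0 1) \<longrightarrow> g i + g 0 \<le> g t + g (n-1)"
    proof (intro allI impI)
      fix i assume i: "i < n"
      have "g 0 \<le> g t" using monole[of 0 t] tl by simp
      moreover have "g i \<le> g (n-1)" using monole[of i "n-1"] i by simp
      ultimately show "g i + g 0 \<le> g t + g (n - 1)" by simp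
    qed
    show "\<forall>j<n. B j 1 0 \<and> B j 1 1 \<longrightarrow> g j + g (n - 1) \<le> g t + g (n-1)"
    proof (intro allI impI)
      fix j assume j: "j < n" "B j 1 0 \<and> B j 1 1" then have "j \<le> t" using hi by (metis not_le)
      then show "g j + g (n - 1) \<le> g t + g (n-1)" using monole[of j t] tl by simp
    qed
    show "\<forall>j<n. \<not> (B j 1 0 \<and> B j 1 1) \<longrightarrow> g t + g (n-1) \<le> g j + g (n - 1)"
    proof (intro allI impI)
      fix j assume j: "j < n" "\<not> (B j 1 0 \<and> B j 1 1)" then have "t \<le> j" using lo by (metis nat_le_linear)
      then show "g t + g (n-1) \<le> g j + g (n - 1)" using monole[of t j] j by simp
    qed
    show "\<exists>i<n. B i 0 0" "\<exists>i<n. B i 0 1" using ex by auto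
    show "\<exists>j<n. B j 1 1" "\<exists>j<n. B j 1 0" using lo z by auto
    show "(\<exists>i<n. g t + g (n-1) = 0 + g i + g 0) \<or> (\<exists>j<n. g t + g (n-1) = 0 + g j + g (n - 1))" using tl by auto
    show "- g t - g (n-1) = - (g t + g (n-1))" by simp
  qed
qed

lemma Vset_struct: "v \<in> Vset n g \<Longrightarrow> \<exists>D. struct n g v 0 D"
  unfolding Vset_def using S1_struct S2_struct S3_struct by blast

lemma struct_shift:
  fixes B :: sig
  assumes st: "struct n g v K L" and al: "\<alpha> = K - L"
    and Bd: "B = (\<lambda>y d z. if d = 0 \<and> z = 0 then cA g v y = L else if d = 0 then cP g v y = K
                   else if z = 0 then cC g v y = K else cQ g v y = L)"
  shows "M_equiv n v (uvec n g \<alpha> B)"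
proof -
  have pA: "\<And>i. i<n \<Longrightarrow> (cA g v i = L \<or> (cP g v i = K \<and> cA g v i = K + g i + g 0)) \<and> (cP g v i = K \<or> (cA g v i = L \<and> cP g v i = L - g i - g 0))"
    and pC: "\<And>j. j<n \<Longrightarrow> (cC g v j = K \<or> (cQ g v j = L \<and> cC g v j = L - g j - g (n-1))) \<and> (cQ g v j = L \<or> (cC g v j = K \<and> cQ g v j = K + g j + g (n-1)))"
    using st unfolding struct_def by blast+
  have "shift n (uvec n g \<alpha> B) v K" unfolding shift_def
  proof (intro allI impI)
    fix i assume i: "i < n"
    note uc = uvec_coords[OF i, of \<alpha> B]
    have "cA g v i = cA g (uvec n g \<alpha> B) i + K" using uc(1) pA[OF i] al by (auto simp: Bd)
    moreover have "cP g v i = cP g (uvec n g \<alpha> B) i + K" using uc(2) pA[OF i] al by (auto simp: Bd)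
    moreover have "cC g v i = cC g (uvec n g \<alpha> B) i + K" using uc(3) pC[OF i] al by (auto simp: Bd)
    moreover have "cQ g v i = cQ g (uvec n g \<alpha> B) i + K" using uc(4) pC[OF i] al by (auto simp: Bd)
    ultimately show "v i 0 0 = uvec n g \<alpha> B i 0 0 + K \<and> v i 0 1 = uvec n g \<alpha> B i 0 1 - K \<and>
         v i 1 0 = uvec n g \<alpha> B i 1 0 + K \<and> v i 1 1 = uvec n g \<alpha> B i 1 1 - K"
      by (simp add: cA_def cP_def cC_def cQ_def algebra_simps)
  qed
  then show ?thesis using shift_equiv M_equiv_sym by blast
qed

lemma struct_Vset:
  assumes st: "struct n g v K L"
  shows "\<exists>w\<in>Vset n g. M_equiv n v w"
proof -
  let ?A = "cA g v" and ?P = "cP g v" and ?C = "cC g v" and ?Q = "cQ g v"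
  define B :: sig where "B = (\<lambda>y d z. if d = 0 \<and> z = 0 then ?A y = L else if d = 0 then ?P y = K
                   else if z = 0 then ?C y = K else ?Q y = L)"
  have B00: "B y 0 0 = (?A y = L)" and B01: "B y 0 1 = (?P y = K)" and B10: "B y 1 0 = (?C y = K)"
    and B11: "B y 1 1 = (?Q y = L)" for y by (simp_all add: B_def)
  have z: "0 < n" and nn: "n - 1 < n" using n1 by auto
  have fe: "feas n g v" using st unfolding struct_def by blast
  have F1: "\<And>i. i<n \<Longrightarrow> ?A i \<le> ?P i + g i + g 0" using fe unfolding feas_def by blast
  have F2: "\<And>i j. i<n \<Longrightarrow> j<n \<Longrightarrow> ?C j \<le> ?P i" using fe unfolding feas_def by blast
  have F3: "\<And>i j. i<n \<Longrightarrow> j<n \<Longrightarrow> ?A i \<le> ?Q j" using fe unfolding feas_def by blast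
  have F4: "\<And>j. j<n \<Longrightarrow> ?C j + g j + g (n-1) \<le> ?Q j" using fe unfolding feas_def by blast
  have pA: "\<And>i. i<n \<Longrightarrow> (?A i = L \<or> (?P i = K \<and> ?A i = K + g i + g 0)) \<and> (?P i = K \<or> (?A i = L \<and> ?P i = L - g i - g 0))"
    and pC: "\<And>j. j<n \<Longrightarrow> (?C j = K \<or> (?Q j = L \<and> ?C j = L - g j - g (n-1))) \<and> (?Q j = L \<or> (?C j = K \<and> ?Q j = K + g j + g (n-1)))"
    and br: "(\<exists>i<n. L = K + g i + g 0) \<or> (\<exists>j<n. L = K + g j + g (n-1))"
    using st unfolding struct_def by blast+
  obtain i1 where i1: "i1 < n" "?A i1 = L" using st unfolding struct_def by blast
  obtain j1 where j1: "j1 < n" "?Q j1 = L" using st unfolding struct_def by blast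
  obtain i2 where i2: "i2 < n" "?P i2 = K" using st unfolding struct_def by blast
  obtain j2 where j2: "j2 < n" "?C j2 = K" using st unfolding struct_def by blast
  have Ale: "\<And>i. i < n \<Longrightarrow> ?A i \<le> L" using F3 j1 by metis
  have Qge: "\<And>j. j < n \<Longrightarrow> L \<le> ?Q j" using F3 i1 by metis
  have Cle: "\<And>j. j < n \<Longrightarrow> ?C j \<le> K" using F2 i2 by metis
  have Pge: "\<And>i. i < n \<Longrightarrow> K \<le> ?P i" using F2 j2 by metis
  have eq: "M_equiv n v (uvec n g (K - L) B)" by (rule struct_shift[OF st refl B_def])
  have S2c: "S2 n B" if D: "L = K + g 0 + g (n-1)"
    unfolding S2_def B00 B01 B10 B11
  proof (intro conjI allI impI)
    show "?A (n-1) = L" using pA[OF nn] D by auto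
    show "?P (n-1) = K" using pA[OF nn] D by auto
    show "?C 0 = K" using pC[OF z] D by auto
    show "?Q 0 = L" using pC[OF z] D by auto
  next
    fix i assume i: "i < n - 1"
    have "g i < g (n-1)" using mono[OF i nn] .
    moreover have il: "i < n" using i by simp
    ultimately show "(?A i = L) \<noteq> (?P i = K)" using pA[OF il] F1[OF il] D by auto
  next
    fix j assume j: "0 < j \<and> j \<le> n - 1"
    have "g 0 < g j" using mono[of 0 j] j nn by auto
    then show "(?C j = K) \<noteq> (?Q j = L)" using pC[of j] F4[of j] j D nn by fastforce
  qed
  show ?thesis
    using br
  proof (elim disjE exE conjE)
    fix t assume t: "t < n" "L = K + g t + g 0"
    show ?thesis
    proof (cases "t = n - 1")
      case True
      then have "S2 n B" using S2c t by (simp add: algebra_simps)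
      moreover have "K - L = - g 0 - g (n-1)" using t True by simp
      moreover have "uvec n g (- g 0 - g (n-1)) B \<in> Vset n g" unfolding Vset_def using \<open>S2 n B\<close> by blast
      ultimately show ?thesis using eq by auto
    next
      case False
      then have tn: "t < n - 1" using t by simp
      have "S1 n t B" unfolding S1_def B00 B01 B10 B11
      proof (intro conjI allI impI)
        show "t + 2 \<le> n" using tn by simp
      next
        fix i assume i: "t \<le> i \<and> i < n"
        show "?A i = L"
        proof (rule ccontr)
          assume h: "?A i \<noteq> L"
          then have "?A i = K + g i + g 0" using pA[of i] i by auto
          then have "g i \<le> g t" using Ale[of i] i t by simp
          then have "i = t" using mono_le_iff[of i t] i t by simp
          then show False using h t pA[of t] by auto
        qed
        show "?P i = K"
        proof (rule ccontr)
          assume h: "?P i \<noteq> K"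
          then have "?P i = L - g i - g 0" using pA[of i] i by auto
          then have "g i \<le> g t" using Pge[of i] i t by simp
          then have "i = t" using mono_le_iff[of i t] i t by simp
          then show False using h t pA[of t] by auto
        qed
      next
        fix i assume i: "i < t"
        have "g i < g t" using mono[OF i t(1)] .
        then show "(?A i = L) \<noteq> (?P i = K)" using pA[of i] F1[of i] i t by auto
      next
        fix i assume i: "i < n"
        have "g 0 \<le> g i" using monole[of 0 i] i by simp
        moreover have "g t < g (n-1)" using mono[OF tn nn] .
        ultimately show "(?C i = K) \<noteq> (?Q i = L)" using pC[of i] F4[of i] i t by auto
      next
        show "\<exists>i<n. \<exists>j<n. ?C i = K \<and> ?Q j = L" using j1 j2 by blast
      qed
      moreover have "K - L = - g 0 - g t" using t by simp
      moreover have "uvec n g (- g 0 - g t) B \<in> Vset n g" unfolding Vset_def using \<open>S1 n t B\<close> by blast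
      ultimately show ?thesis using eq by auto
    qed
  next
    fix t assume t: "t < n" "L = K + g t + g (n-1)"
    show ?thesis
    proof (cases "t = 0")
      case True
      then have "S2 n B" using S2c t by (simp add: algebra_simps)
      moreover have "K - L = - g 0 - g (n-1)" using t True by simp
      moreover have "uvec n g (- g 0 - g (n-1)) B \<in> Vset n g" unfolding Vset_def using \<open>S2 n B\<close> by blast
      ultimately show ?thesis using eq by auto
    next
      case False
      have "S3 n t B" unfolding S3_def B00 B01 B10 B11
      proof (intro conjI allI impI)
        show "1 \<le> t" using False by simp
        show "t \<le> n - 1" using t by simp
      next
        fix i assume i: "i \<le> t"
        have il: "i < n" using i t by simp
        show "?C i = K"
        proof (rule ccontr)
          assume h: "?C i \<noteq> K"
          then have "?C i = L - g i - g (n-1)" using pC[of i] il by auto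
          then have "g t \<le> g i" using Cle[of i] il t by simp
          then have "i = t" using mono_le_iff[of t i] i il t by simp
          then show False using h t pC[of t] by auto
        qed
        show "?Q i = L"
        proof (rule ccontr)
          assume h: "?Q i \<noteq> L"
          then have "?Q i = K + g i + g (n-1)" using pC[of i] il by auto
          then have "g t \<le> g i" using Qge[of i] il t by simp
          then have "i = t" using mono_le_iff[of t i] i il t by simp
          then show False using h t pC[of t] by auto
        qed
      next
        fix i assume i: "t < i \<and> i < n"
        have "g t < g i" using mono[of t i] i by simp
        then show "(?C i = K) \<noteq> (?Q i = L)" using pC[of i] F4[of i] i t by auto
      next
        fix i assume i: "i < n"
        have "g i \<le> g (n-1)" using monole[of i "n-1"] i by simp
        moreover have "g 0 < g t" using mono[of 0 t] t False by simp
        ultimately show "(?A i = L) \<noteq> (?P i = K)" using pA[of i] F1[of i] i t by auto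
      next
        show "\<exists>i<n. \<exists>j<n. ?A i = L \<and> ?P j = K" using i1 i2 by blast
      qed
      moreover have "K - L = - g t - g (n-1)" using t by simp
      moreover have "uvec n g (- g t - g (n-1)) B \<in> Vset n g" unfolding Vset_def using \<open>S3 n t B\<close> by blast
      ultimately show ?thesis using eq by auto
    qed
  qed
qed

lemma Vset_out: "v \<in> Vset n g \<Longrightarrow> \<not> (y < n \<and> d \<le> 1 \<and> z \<le> (1::nat)) \<Longrightarrow> v y d z = 0"
  unfolding Vset_def by (auto simp: uvec_def)

lemma struct_Cmax:
  assumes "struct n g v K L"
  shows "\<forall>j<n. cC g v j \<le> K" "\<exists>j<n. cC g v j = K"
proof -
  obtain i where "i < n" "cP g v i = K" using assms unfolding struct_def by blast
  then show "\<forall>j<n. cC g v j \<le> K" using assms unfolding struct_def feas_def by metis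
  show "\<exists>j<n. cC g v j = K" using assms unfolding struct_def by blast
qed

lemma Vset_distinct:
  assumes v: "v \<in> Vset n g" and w: "w \<in> Vset n g" and e: "M_equiv n v w"
  shows "v = w"
proof -
  obtain D1 where s1: "struct n g v 0 D1" using Vset_struct[OF v] by blast
  obtain D2 where s2: "struct n g w 0 D2" using Vset_struct[OF w] by blast
  define s where "s = w 0 0 0 - v 0 0 0"
  have sh: "shift n v w s" using equiv_shift[OF e] s_def by simp
  have cs: "\<And>j. j < n \<Longrightarrow> cC g w j = cC g v j + s" using sh unfolding shift_def cC_def by simp
  obtain j where j: "j < n" "cC g w j = 0" using struct_Cmax(2)[OF s2] by blast
  obtain j' where j': "j' < n" "cC g v j' = 0" using struct_Cmax(2)[OF s1] by blast
  have "cC g v j \<le> 0" using struct_Cmax(1)[OF s1] j by blast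
  moreover have "cC g w j' \<le> 0" using struct_Cmax(1)[OF s2] j' by blast
  ultimately have s0: "s = 0" using cs[OF j(1)] cs[OF j'(1)] j j' by linarith
  show "v = w"
  proof (intro ext)
    fix y d z
    show "v y d z = w y d z"
    proof (cases "y < n \<and> d \<le> 1 \<and> z \<le> (1::nat)")
      case True
      then have "y < n" "d = 0 \<or> d = 1" "z = 0 \<or> z = 1" by auto
      then show ?thesis using sh s0 unfolding shift_def by auto
    next
      case False
      then show ?thesis using Vset_out[OF v False] Vset_out[OF w False] by simp
    qed
  qed
qed

end

theorem theorem1:
  fixes n :: nat and \<gamma> :: "nat \<Rightarrow> real"
  assumes "1 \<le> n"
    and "\<And>i j. i < j \<Longrightarrow> j < n \<Longrightarrow> \<gamma> i < \<gamma> j"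
  shows "(\<forall>v\<in>Vset n \<gamma>. is_vertex n \<gamma> v)
    \<and> (\<forall>v\<in>Vset n \<gamma>. \<forall>w\<in>Vset n \<gamma>. v \<noteq> w \<longrightarrow> \<not> M_equiv n v w)
    \<and> (\<forall>v. is_vertex n \<gamma> v \<longrightarrow> (\<exists>w\<in>Vset n \<gamma>. M_equiv n v w))"
proof (intro conjI ballI allI impI)
  fix v assume "v \<in> Vset n \<gamma>"
  then obtain D where "struct n \<gamma> v 0 D" using Vset_struct[where n=n and g=\<gamma>, OF assms] by blast
  then show "is_vertex n \<gamma> v" using struct_vertex[where n=n and g=\<gamma>, OF assms] by blast
next
  fix v w assume "v \<in> Vset n \<gamma>" "w \<in> Vset n \<gamma>" "v \<noteq> w"
  then show "\<not> M_equiv n v w" using Vset_distinct[where n=n and g=\<gamma>, OF assms] by blast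
next
  fix v assume "is_vertex n \<gamma> v"
  then obtain K L where "struct n \<gamma> v K L" using vertex_struct[where n=n and g=\<gamma>, OF assms] by blast
  then show "\<exists>w\<in>Vset n \<gamma>. M_equiv n v w" using struct_Vset[where n=n and g=\<gamma>, OF assms] by blast
qed

end
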